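(* Let $\Gamma$ be a nilpotent group, let $r\ge1$, and for each $j=1,\ldots,r$ let $x^{(j)}_1,\ldots,x^{(j)}_{m_j}$ be elements of $\Gamma$, regarded as distinct letters. Let $\alpha$ be a commutator form of weight $r$. Then there exist formal commutators $\eta_1,\ldots,\eta_t$ in the letters $x^{(j)}_i$ with the following properties. (i) In $\Gamma$, $\alpha\big(\prod_{i=1}^{m_1}x^{(1)}_i,\ldots,\prod_{i=1}^{m_r}x^{(r)}_i\big)=\eta_1\cdots\eta_t$. (ii) For each tuple $(i_1,\ldots,i_r)$ with $i_j\in[1,m_j]$ there is some $\eta_l$ equal to $\alpha(x^{(1)}_{i_1},\ldots,x^{(r)}_{i_r})$. (iii) For every $l\in[1,t]$ and every $j\in[1,r]$ there is at least one $i\in[1,m_j]$ with $x^{(j)}_i\sqsubset\eta_l$. (iv) The $\eta_l$ are pairwise distinct as formal commutators in the $x^{(j)}_i$. (v) If $\eta_l$ is not of the form $\alpha(x^{(1)}_{i_1},\ldots,x^{(r)}_{i_r})$ then $\eta_l$ has total weight greater than $r$.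
   Context: $[u,v]=u^{-1}v^{-1}uv$. Formal commutators in letters: each letter is one, and $[\beta,\beta']$ is one whenever $\beta,\beta'$ are; they are interpreted as group elements in the obvious way. The total weight of a formal commutator is the number of letter occurrences in it (weight 1 for a letter, and weights add under bracketing). Components: $C(x)=\{x\}$ for a letter, $C([\beta,\beta'])=C(\beta)\cup C(\beta')\cup\{[\beta,\beta']\}$; $\beta\sqsubset\gamma$ means $\beta\in C(\gamma)$. A commutator form of weight $n$ is a map sending an $n$-tuple of letters to a formal commutator, defined recursively: the unique form of weight 1 is $x\mapsto x$; a form of weight $n\ge2$ is any map $\gamma(y_1,\ldots,y_n)=[\gamma_1(y_{\sigma(1)},\ldots,y_{\sigma(n_1)}),\gamma_2(y_{\sigma(n_1+1)},\ldots,y_{\sigma(n)})]$ where $\gamma_1,\gamma_2$ are forms of weights $n_1,n-n_1\ge1$ and $\sigma\in S_n$. Applied to group elements, a form gives a group element. *)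

theory Defs
  imports "HOL-Algebra.Algebra" "HOL-Combinatorics.Permutations"
begin

definition gcomm :: "('g, 'b) monoid_scheme \<Rightarrow> 'g \<Rightarrow> 'g \<Rightarrow> 'g" where
  "gcomm G u v = inv\<^bsub>G\<^esub> u \<otimes>\<^bsub>G\<^esub> inv\<^bsub>G\<^esub> v \<otimes>\<^bsub>G\<^esub> u \<otimes>\<^bsub>G\<^esub> v"

fun lower_central :: "('g, 'b) monoid_scheme \<Rightarrow> nat \<Rightarrow> 'g set" where
  "lower_central G 0 = carrier G"
| "lower_central G (Suc n) =
     generate G {gcomm G x y | x y. x \<in> lower_central G n \<and> y \<in> carrier G}"

definition nilpotent_group :: "('g, 'b) monoid_scheme \<Rightarrow> bool" where
  "nilpotent_group G \<longleftrightarrow> group G \<and> (\<exists>n. lower_central G n = {\<one>\<^bsub>G\<^esub>})"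

fun gprod :: "('g, 'b) monoid_scheme \<Rightarrow> (nat \<Rightarrow> 'g) \<Rightarrow> nat \<Rightarrow> 'g" where
  "gprod G f 0 = \<one>\<^bsub>G\<^esub>"
| "gprod G f (Suc m) = gprod G f m \<otimes>\<^bsub>G\<^esub> f (Suc m)"

fun listprod :: "('g, 'b) monoid_scheme \<Rightarrow> 'g list \<Rightarrow> 'g" where
  "listprod G [] = \<one>\<^bsub>G\<^esub>"
| "listprod G (a # as) = a \<otimes>\<^bsub>G\<^esub> listprod G as"

datatype 'l fcomm = Letter 'l | Comm "'l fcomm" "'l fcomm"

fun fweight :: "'l fcomm \<Rightarrow> nat" where
  "fweight (Letter x) = 1"
| "fweight (Comm a b) = fweight a + fweight b"

text \<open>Components C(beta); beta \<sqsubset> gamma iff beta \<in> components gamma.\<close>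
fun components :: "'l fcomm \<Rightarrow> 'l fcomm set" where
  "components (Letter x) = {Letter x}"
| "components (Comm a b) = components a \<union> components b \<union> {Comm a b}"

fun letters :: "'l fcomm \<Rightarrow> 'l set" where
  "letters (Letter x) = {x}"
| "letters (Comm a b) = letters a \<union> letters b"

fun feval :: "('g, 'b) monoid_scheme \<Rightarrow> ('l \<Rightarrow> 'g) \<Rightarrow> 'l fcomm \<Rightarrow> 'g" where
  "feval G v (Letter x) = v x"
| "feval G v (Comm a b) = gcomm G (feval G v a) (feval G v b)"

text \<open>Syntax of commutator forms: FLeaf is the unique weight-1 form y1 \<mapsto> y1;
  FNode g1 g2 \<sigma> is the form
  (y1..yn) \<mapsto> [g1(y_\<sigma>(1),..,y_\<sigma>(n1)), g2(y_\<sigma>(n1+1),..,y_\<sigma>(n))]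
  with n1 = weight of g1. Tuples are indexed 1..n.\<close>
datatype cform = FLeaf | FNode cform cform "nat \<Rightarrow> nat"

fun form_weight :: "cform \<Rightarrow> nat" where
  "form_weight FLeaf = 1"
| "form_weight (FNode g1 g2 \<sigma>) = form_weight g1 + form_weight g2"

fun wf_form :: "cform \<Rightarrow> bool" where
  "wf_form FLeaf = True"
| "wf_form (FNode g1 g2 \<sigma>) \<longleftrightarrow>
     wf_form g1 \<and> wf_form g2 \<and> \<sigma> permutes {1..form_weight g1 + form_weight g2}"

fun apply_form :: "cform \<Rightarrow> (nat \<Rightarrow> 'l) \<Rightarrow> 'l fcomm" where
  "apply_form FLeaf y = Letter (y 1)"
| "apply_form (FNode g1 g2 \<sigma>) y =
     Comm (apply_form g1 (\<lambda>k. y (\<sigma> k)))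
          (apply_form g2 (\<lambda>k. y (\<sigma> (form_weight g1 + k))))"

definition is_comm_form :: "nat \<Rightarrow> cform \<Rightarrow> bool" where
  "is_comm_form n \<alpha> \<longleftrightarrow> wf_form \<alpha> \<and> form_weight \<alpha> = n"

end

theory Submission
  imports Defs
begin

definition gconj :: "('g, 'b) monoid_scheme \<Rightarrow> 'g \<Rightarrow> 'g \<Rightarrow> 'g" where
  "gconj G x w = inv\<^bsub>G\<^esub> w \<otimes>\<^bsub>G\<^esub> x \<otimes>\<^bsub>G\<^esub> w"

context group begin

lemma cancA [simp]: "x \<in> carrier G \<Longrightarrow> y \<in> carrier G \<Longrightarrow> x \<otimes> (inv x \<otimes> y) = y"
  by (simp add: m_assoc[symmetric])
lemma cancB [simp]: "x \<in> carrier G \<Longrightarrow> y \<in> carrier G \<Longrightarrow> inv x \<otimes> (x \<otimes> y) = y"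
  by (simp add: m_assoc[symmetric])

lemma gcomm_closed [simp]: "x \<in> carrier G \<Longrightarrow> y \<in> carrier G \<Longrightarrow> gcomm G x y \<in> carrier G"
  by (simp add: gcomm_def)
lemma gconj_closed [simp]: "x \<in> carrier G \<Longrightarrow> y \<in> carrier G \<Longrightarrow> gconj G x y \<in> carrier G"
  by (simp add: gconj_def)
lemma gconj_eq: "x \<in> carrier G \<Longrightarrow> w \<in> carrier G \<Longrightarrow> x \<otimes> gcomm G x w = gconj G x w"
  by (simp add: gcomm_def gconj_def m_assoc)
lemma gconj_one_right: "x \<in> carrier G \<Longrightarrow> gconj G x \<one> = x"
  by (simp add: gconj_def)
lemma gconj_one: "w \<in> carrier G \<Longrightarrow> gconj G \<one> w = \<one>"
  by (simp add: gconj_def)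
lemma gconj_mult: "x \<in> carrier G \<Longrightarrow> y \<in> carrier G \<Longrightarrow> w \<in> carrier G \<Longrightarrow>
   gconj G (x \<otimes> y) w = gconj G x w \<otimes> gconj G y w"
  by (simp add: gconj_def m_assoc)
lemma gconj_gconj: "x \<in> carrier G \<Longrightarrow> a \<in> carrier G \<Longrightarrow> b \<in> carrier G \<Longrightarrow>
   gconj G (gconj G x a) b = gconj G x (a \<otimes> b)"
  by (simp add: gconj_def m_assoc inv_mult_group)
lemma gcomm_one_left: "y \<in> carrier G \<Longrightarrow> gcomm G \<one> y = \<one>"
  by (simp add: gcomm_def m_assoc)
lemma gcomm_one_right: "y \<in> carrier G \<Longrightarrow> gcomm G y \<one> = \<one>"
  by (simp add: gcomm_def m_assoc)
lemma gcomm_mult_left: "a \<in> carrier G \<Longrightarrow> b \<in> carrier G \<Longrightarrow> y \<in> carrier G \<Longrightarrow>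
   gcomm G (a \<otimes> b) y = gconj G (gcomm G a y) b \<otimes> gcomm G b y"
  by (simp add: gcomm_def gconj_def m_assoc inv_mult_group)
lemma gcomm_mult_right: "a \<in> carrier G \<Longrightarrow> b \<in> carrier G \<Longrightarrow> x \<in> carrier G \<Longrightarrow>
   gcomm G x (a \<otimes> b) = gcomm G x b \<otimes> gconj G (gcomm G x a) b"
  by (simp add: gcomm_def gconj_def m_assoc inv_mult_group)
end


lemma (in group) listprod_closed [simp]: "set xs \<subseteq> carrier G \<Longrightarrow> listprod G xs \<in> carrier G"
  by (induction xs) auto

lemma (in group) listprod_append: "set xs \<subseteq> carrier G \<Longrightarrow> set ys \<subseteq> carrier G \<Longrightarrow>
  listprod G (xs @ ys) = listprod G xs \<otimes> listprod G ys"
  by (induction xs) (auto simp: m_assoc)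

lemma (in group) gprod_listprod: "(\<forall>i\<in>{1..m}. f i \<in> carrier G) \<Longrightarrow>
   gprod G f m = listprod G (map f [1..<Suc m])"
proof (induction m)
  case 0 then show ?case by simp
next
  case (Suc m)
  have c: "set (map f [1..<Suc m]) \<subseteq> carrier G" using Suc.prems by auto
  have "gprod G f (Suc m) = listprod G (map f [1..<Suc m]) \<otimes> f (Suc m)"
    using Suc by simp
  also have "\<dots> = listprod G (map f [1..<Suc m] @ [f (Suc m)])"
    using c Suc.prems by (simp add: listprod_append)
  finally show ?case by simp
qed

section \<open>Formal combinatorics\<close>

fun rspine :: "'l fcomm \<Rightarrow> 'l fcomm list" where
  "rspine (Letter x) = []"
| "rspine (Comm a b) = rspine a @ [b]"

fun fbase :: "'l fcomm \<Rightarrow> 'l" where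
  "fbase (Letter x) = x"
| "fbase (Comm a b) = fbase a"

lemma foldl_rspine: "rspine (foldl Comm t S) = rspine t @ S"
  by (induction S arbitrary: t) auto
lemma foldl_fbase: "fbase (foldl Comm t S) = fbase t"
  by (induction S arbitrary: t) auto
lemma fcomm_recon: "foldl Comm (Letter (fbase e)) (rspine e) = e"
  by (induction e) auto
lemma foldl_inj: "foldl Comm t S = foldl Comm t' S \<Longrightarrow> t = t'"
  by (induction S arbitrary: t t') (auto dest: meta_spec2)
lemma foldl_letters: "letters (foldl Comm t S) = letters t \<union> (\<Union>s\<in>set S. letters s)"
  by (induction S arbitrary: t) auto
lemma foldl_components: "components t \<subseteq> components (foldl Comm t S)"
proof (induction S arbitrary: t)
  case (Cons a S) then show ?case using Cons.IH[of "Comm t a"] by auto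
qed simp
lemma foldl_weight: "fweight (foldl Comm t S) \<ge> fweight t"
proof (induction S arbitrary: t)
  case (Cons a S) then show ?case using Cons.IH[of "Comm t a"] by auto
qed simp
lemma fweight_pos: "fweight e \<ge> 1"
  by (induction e) auto
lemma foldl_weight_ne: "S \<noteq> [] \<Longrightarrow> fweight (foldl Comm t S) > fweight t"
proof -
  assume "S \<noteq> []"
  then obtain s S' where "S = s # S'" by (cases S) auto
  then show ?thesis using foldl_weight[of "Comm t s" S'] fweight_pos[of s] by simp
qed
lemma letters_ne: "letters e \<noteq> {}"
  by (induction e) auto
lemma letter_components: "Letter a \<in> components e \<longleftrightarrow> a \<in> letters e"
  by (induction e) auto
lemma rspine_letters: "c \<in> set (rspine e) \<Longrightarrow> letters c \<subseteq> letters e"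
  by (induction e) auto
lemma rspine_size: "c \<in> set (rspine e) \<Longrightarrow> size c < size e"
  by (induction e) auto

fun conjexp :: "'l fcomm list \<Rightarrow> 'l fcomm list \<Rightarrow> 'l fcomm list" where
  "conjexp T [] = T"
| "conjexp T (w # W) = conjexp (concat (map (\<lambda>t. [t, Comm t w]) T)) W"

fun cxr :: "'l fcomm \<Rightarrow> 'l fcomm list \<Rightarrow> 'l fcomm list" where
  "cxr u [] = []"
| "cxr u (v # V) = cxr u V @ conjexp [Comm u v] V"

fun cx :: "'l fcomm list \<Rightarrow> 'l fcomm list \<Rightarrow> 'l fcomm list" where
  "cx [] V = []"
| "cx (u # U) V = conjexp (cxr u V) U @ cx U V"

lemma conjexp_sup: "set T \<subseteq> set (conjexp T W)"
proof (induction W arbitrary: T)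
  case (Cons w W)
  have "set T \<subseteq> set (concat (map (\<lambda>t. [t, Comm t w]) T))" by auto
  then show ?case using Cons.IH[of "concat (map (\<lambda>t. [t, Comm t w]) T)"] by auto
qed simp

lemma conjexp_mem: "e \<in> set (conjexp T W) \<Longrightarrow> \<exists>t\<in>set T. \<exists>S. set S \<subseteq> set W \<and> e = foldl Comm t S"
proof (induction W arbitrary: T e)
  case Nil then show ?case by (intro bexI[of _ e] exI[of _ "[]"]) auto
next
  case (Cons w W)
  from Cons.IH[OF Cons.prems[simplified]] obtain t' S where
    t': "t' \<in> set (concat (map (\<lambda>t. [t, Comm t w]) T))" and S: "set S \<subseteq> set W" "e = foldl Comm t' S"
    by blast
  from t' obtain t where t: "t \<in> set T" "t' = t \<or> t' = Comm t w" by auto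
  show ?case
  proof (cases "t' = t")
    case True then show ?thesis using t S by auto
  next
    case False
    then have "e = foldl Comm t (w # S)" using t S by auto
    then show ?thesis using t S by (intro bexI[of _ t] exI[of _ "w # S"]) auto
  qed
qed

lemma distinct_step: "distinct T \<Longrightarrow> (\<forall>t\<in>set T. w \<notin> set (rspine t)) \<Longrightarrow>
   distinct (concat (map (\<lambda>t. [t, Comm t w]) T))"
proof (induction T)
  case Nil then show ?case by simp
next
  case (Cons t T)
  have "t \<noteq> Comm t w"
  proof
    assume "t = Comm t w" then have "size t = size (Comm t w)" by simp
    then show False by simp
  qed
  moreover have "t \<notin> set (concat (map (\<lambda>t. [t, Comm t w]) T))"
    using Cons.prems by auto
  moreover have "Comm t w \<notin> set (concat (map (\<lambda>t. [t, Comm t w]) T))"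
    using Cons.prems by auto
  ultimately show ?case using Cons by auto
qed

lemma conjexp_distinct: "distinct T \<Longrightarrow> distinct W \<Longrightarrow> (\<forall>t\<in>set T. set (rspine t) \<inter> set W = {}) \<Longrightarrow>
   distinct (conjexp T W)"
proof (induction W arbitrary: T)
  case Nil then show ?case by simp
next
  case (Cons w W)
  have d: "distinct (concat (map (\<lambda>t. [t, Comm t w]) T))"
    using Cons.prems by (intro distinct_step) auto
  have "\<forall>t\<in>set (concat (map (\<lambda>t. [t, Comm t w]) T)). set (rspine t) \<inter> set W = {}"
    using Cons.prems by auto
  then show ?case using Cons d by simp
qed

lemma cxr_mem: "e \<in> set (cxr u V) \<Longrightarrow> \<exists>v\<in>set V. \<exists>S. set S \<subseteq> set V \<and> e = foldl Comm (Comm u v) S"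
proof (induction V)
  case Nil then show ?case by simp
next
  case (Cons v V)
  show ?case
  proof (cases "e \<in> set (cxr u V)")
    case True
    then obtain v' S where "v' \<in> set V" "set S \<subseteq> set V" "e = foldl Comm (Comm u v') S"
      using Cons.IH by blast
    then show ?thesis by (intro bexI[of _ v'] exI[of _ S]) auto
  next
    case False
    then have "e \<in> set (conjexp [Comm u v] V)" using Cons.prems by simp
    from conjexp_mem[OF this] obtain S where "set S \<subseteq> set V" "e = foldl Comm (Comm u v) S" by auto
    then show ?thesis by (intro bexI[of _ v] exI[of _ S]) auto
  qed
qed

lemma cx_mem: "e \<in> set (cx U V) \<Longrightarrow> \<exists>u\<in>set U. \<exists>v\<in>set V. \<exists>S. set S \<subseteq> set U \<union> set V \<and> e = foldl Comm (Comm u v) S"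
proof (induction U)
  case Nil then show ?case by simp
next
  case (Cons u U)
  show ?case
  proof (cases "e \<in> set (cx U V)")
    case True
    then obtain u' v S where "u' \<in> set U" "v \<in> set V" "set S \<subseteq> set U \<union> set V" "e = foldl Comm (Comm u' v) S"
      using Cons.IH by blast
    then show ?thesis by (intro bexI[of _ u'] bexI[of _ v] exI[of _ S]) auto
  next
    case False
    then have "e \<in> set (conjexp (cxr u V) U)" using Cons.prems by simp
    from conjexp_mem[OF this] obtain t S where t: "t \<in> set (cxr u V)" "set S \<subseteq> set U" "e = foldl Comm t S"
      by blast
    from cxr_mem[OF t(1)] obtain v S' where "v \<in> set V" "set S' \<subseteq> set V" "t = foldl Comm (Comm u v) S'"
      by blast
    then show ?thesis using t by (intro bexI[of _ u] bexI[of _ v] exI[of _ "S' @ S"]) auto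
  qed
qed

lemma cxr_basic: "v \<in> set V \<Longrightarrow> Comm u v \<in> set (cxr u V)"
proof (induction V)
  case (Cons v0 V)
  show ?case
  proof (cases "v = v0")
    case True then show ?thesis using conjexp_sup[of "[Comm u v0]" V] by auto
  next
    case False then show ?thesis using Cons by auto
  qed
qed simp

lemma cx_basic: "u \<in> set U \<Longrightarrow> v \<in> set V \<Longrightarrow> Comm u v \<in> set (cx U V)"
proof (induction U)
  case (Cons u0 U)
  show ?case
  proof (cases "u = u0")
    case True then show ?thesis using conjexp_sup[of "cxr u0 V" U] cxr_basic[OF Cons.prems(2), of u0] by auto
  next
    case False then show ?thesis using Cons by auto
  qed
qed simp

lemma cxr_distinct: "distinct V \<Longrightarrow> set (rspine u) \<inter> set V = {} \<Longrightarrow> distinct (cxr u V)"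
proof (induction V)
  case Nil then show ?case by simp
next
  case (Cons v V)
  have d1: "distinct (cxr u V)" using Cons by auto
  have d2: "distinct (conjexp [Comm u v] V)"
    using Cons.prems by (intro conjexp_distinct) auto
  have "set (cxr u V) \<inter> set (conjexp [Comm u v] V) = {}"
  proof (rule ccontr)
    assume "\<not> ?thesis"
    then obtain e where e1: "e \<in> set (cxr u V)" and e2: "e \<in> set (conjexp [Comm u v] V)" by blast
    from cxr_mem[OF e1] obtain v' S where "v' \<in> set V" "e = foldl Comm (Comm u v') S" by blast
    moreover from conjexp_mem[OF e2] obtain S' where "e = foldl Comm (Comm u v) S'" by auto
    ultimately have "rspine u @ v' # S = rspine u @ v # S'"
      by (metis append.assoc append_Cons append_Nil foldl_rspine rspine.simps(2))
    then have "v' = v" by simp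
    with \<open>v' \<in> set V\<close> Cons.prems show False by simp
  qed
  then show ?case using d1 d2 by (simp only: cxr.simps distinct_append)
qed

lemma split_first: "xs @ a # ys = xs' @ a' # ys' \<Longrightarrow> a \<in> P \<Longrightarrow> a' \<in> P \<Longrightarrow>
   set xs \<inter> P = {} \<Longrightarrow> set xs' \<inter> P = {} \<Longrightarrow> xs = xs' \<and> a = a' \<and> ys = ys'"
proof (induction xs arbitrary: xs')
  case Nil then show ?case by (cases xs') auto
next
  case (Cons x xs) then show ?case by (cases xs') auto
qed

lemma cx_distinct:
  assumes "distinct U" "distinct V" "set U \<inter> set V = {}"
    "\<forall>u\<in>set U. set (rspine u) \<inter> set V = {}" "\<forall>u\<in>set U. set (rspine u) \<inter> set U = {}"
  shows "distinct (cx U V)"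
  using assms
proof (induction U)
  case Nil then show ?case by simp
next
  case (Cons u U)
  have dr: "distinct (cxr u V)" using Cons.prems by (intro cxr_distinct) auto
  have d1: "distinct (conjexp (cxr u V) U)"
  proof (rule conjexp_distinct[OF dr])
    show "distinct U" using Cons.prems by simp
    show "\<forall>t\<in>set (cxr u V). set (rspine t) \<inter> set U = {}"
    proof
      fix t assume "t \<in> set (cxr u V)"
      from cxr_mem[OF this] obtain v S where "v \<in> set V" "set S \<subseteq> set V" "t = foldl Comm (Comm u v) S"
        by blast
      then show "set (rspine t) \<inter> set U = {}" using Cons.prems
        by (auto simp: foldl_rspine)
    qed
  qed
  have d2: "distinct (cx U V)" using Cons by auto
  have "set (conjexp (cxr u V) U) \<inter> set (cx U V) = {}"
  proof (rule ccontr)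
    assume "\<not> ?thesis"
    then obtain e where e1: "e \<in> set (conjexp (cxr u V) U)" and e2: "e \<in> set (cx U V)" by blast
    from conjexp_mem[OF e1] obtain t S where t: "t \<in> set (cxr u V)" "e = foldl Comm t S" by blast
    from cxr_mem[OF t(1)] obtain v S1 where v: "v \<in> set V" "t = foldl Comm (Comm u v) S1" by blast
    from cx_mem[OF e2] obtain u' v' S2 where u': "u' \<in> set U" "v' \<in> set V" "e = foldl Comm (Comm u' v') S2"
      by blast
    have "rspine u @ v # (S1 @ S) = rspine u' @ v' # S2"
      using t v u' by (metis append.assoc append_Cons append_Nil foldl_append foldl_rspine rspine.simps(2))
    moreover have "set (rspine u) \<inter> set V = {}" "set (rspine u') \<inter> set V = {}" using Cons.prems u' by auto
    ultimately have eq: "rspine u = rspine u'" "v = v'" "S1 @ S = S2"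
      using split_first[of "rspine u" v "S1 @ S" "rspine u'" v' S2 "set V"] v u' by auto
    have e1: "e = foldl Comm (Comm u v) (S1 @ S)" using t v by simp
    have e2: "e = foldl Comm (Comm u' v) (S1 @ S)" using u' eq by simp
    have "foldl Comm (Comm u v) (S1 @ S) = foldl Comm (Comm u' v) (S1 @ S)"
      using e1 e2 by simp
    then have "u = u'" using foldl_inj by blast
    with u' Cons.prems show False by simp
  qed
  then show ?case using d1 d2 by (simp only: cx.simps distinct_append)
qed

context group begin

lemma val_step: "(\<forall>t\<in>set T. f t \<in> carrier G) \<Longrightarrow> wv \<in> carrier G \<Longrightarrow>
   listprod G (concat (map (\<lambda>t. [f t, gcomm G (f t) wv]) T)) = gconj G (listprod G (map f T)) wv"
proof (induction T)
  case Nil then show ?case by (simp add: gconj_one)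
next
  case (Cons t T)
  have c: "set (map f T) \<subseteq> carrier G" using Cons.prems by auto
  have "listprod G (concat (map (\<lambda>t. [f t, gcomm G (f t) wv]) (t # T)))
     = (f t \<otimes> gcomm G (f t) wv) \<otimes> gconj G (listprod G (map f T)) wv"
    using Cons c by (simp add: m_assoc)
  also have "\<dots> = gconj G (f t \<otimes> listprod G (map f T)) wv"
    using Cons.prems c by (simp add: gconj_eq gconj_mult)
  finally show ?case by simp
qed

lemma feval_foldl_closed: "feval G v t \<in> carrier G \<Longrightarrow> (\<forall>s\<in>set S. feval G v s \<in> carrier G) \<Longrightarrow>
  feval G v (foldl Comm t S) \<in> carrier G"
  by (induction S arbitrary: t) auto

lemma feval_closed: "(\<forall>a\<in>letters e. v a \<in> carrier G) \<Longrightarrow> feval G v e \<in> carrier G"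
  by (induction e) auto

lemma val_conjexp: "(\<forall>t\<in>set T. feval G v t \<in> carrier G) \<Longrightarrow> (\<forall>w\<in>set W. feval G v w \<in> carrier G) \<Longrightarrow>
  listprod G (map (feval G v) (conjexp T W)) =
   gconj G (listprod G (map (feval G v) T)) (listprod G (map (feval G v) W))"
proof (induction W arbitrary: T)
  case Nil
  have "set (map (feval G v) T) \<subseteq> carrier G" using Nil by auto
  then show ?case by (simp add: gconj_one_right)
next
  case (Cons w W)
  let ?T' = "concat (map (\<lambda>t. [t, Comm t w]) T)"
  have c': "\<forall>t\<in>set ?T'. feval G v t \<in> carrier G" using Cons.prems by auto
  have cT: "set (map (feval G v) T) \<subseteq> carrier G" using Cons.prems by auto
  have cW: "set (map (feval G v) W) \<subseteq> carrier G" using Cons.prems by auto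
  have m: "map (feval G v) ?T' = concat (map (\<lambda>t. [feval G v t, gcomm G (feval G v t) (feval G v w)]) T)"
    by (induction T) auto
  have "listprod G (map (feval G v) (conjexp T (w # W))) =
     gconj G (listprod G (map (feval G v) ?T')) (listprod G (map (feval G v) W))"
    using Cons.IH[OF c'] Cons.prems by simp
  also have "listprod G (map (feval G v) ?T') = gconj G (listprod G (map (feval G v) T)) (feval G v w)"
    unfolding m using Cons.prems by (intro val_step) auto
  finally show ?case using cT cW Cons.prems by (simp add: gconj_gconj)
qed

lemma cxr_closed: "feval G v u \<in> carrier G \<Longrightarrow> (\<forall>w\<in>set V. feval G v w \<in> carrier G) \<Longrightarrow>
   e \<in> set (cxr u V) \<Longrightarrow> feval G v e \<in> carrier G"
  by (drule cxr_mem) (auto intro!: feval_foldl_closed)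

lemma cx_closed: "(\<forall>w\<in>set U. feval G v w \<in> carrier G) \<Longrightarrow> (\<forall>w\<in>set V. feval G v w \<in> carrier G) \<Longrightarrow>
   e \<in> set (cx U V) \<Longrightarrow> feval G v e \<in> carrier G"
  by (drule cx_mem) (auto intro!: feval_foldl_closed)

lemma conjexp_closed: "(\<forall>w\<in>set T. feval G v w \<in> carrier G) \<Longrightarrow> (\<forall>w\<in>set W. feval G v w \<in> carrier G) \<Longrightarrow>
   e \<in> set (conjexp T W) \<Longrightarrow> feval G v e \<in> carrier G"
  by (drule conjexp_mem) (auto intro!: feval_foldl_closed)

lemma val_cxr: "feval G v u \<in> carrier G \<Longrightarrow> (\<forall>w\<in>set V. feval G v w \<in> carrier G) \<Longrightarrow>
   listprod G (map (feval G v) (cxr u V)) = gcomm G (feval G v u) (listprod G (map (feval G v) V))"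
proof (induction V)
  case Nil then show ?case by (simp add: gcomm_one_right)
next
  case (Cons w V)
  have cVe: "\<forall>w\<in>set V. feval G v w \<in> carrier G" using Cons.prems(2) by simp
  have cw: "\<forall>t\<in>set [Comm u w]. feval G v t \<in> carrier G" using Cons.prems by simp
  have c1: "set (map (feval G v) (cxr u V)) \<subseteq> carrier G" using cxr_closed[OF Cons.prems(1) cVe] by auto
  have c2: "set (map (feval G v) (conjexp [Comm u w] V)) \<subseteq> carrier G"
    using conjexp_closed[OF cw cVe] by auto
  have cV: "set (map (feval G v) V) \<subseteq> carrier G" using Cons.prems by auto
  have "listprod G (map (feval G v) (cxr u (w # V))) =
     listprod G (map (feval G v) (cxr u V)) \<otimes> listprod G (map (feval G v) (conjexp [Comm u w] V))"
    using c1 c2 by (simp add: listprod_append)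
  also have "\<dots> = gcomm G (feval G v u) (listprod G (map (feval G v) V)) \<otimes>
       gconj G (gcomm G (feval G v u) (feval G v w)) (listprod G (map (feval G v) V))"
    using Cons val_conjexp[where T="[Comm u w]" and W=V] by simp
  also have "\<dots> = gcomm G (feval G v u) (feval G v w \<otimes> listprod G (map (feval G v) V))"
    using Cons.prems cV by (simp add: gcomm_mult_right)
  finally show ?case by simp
qed

lemma val_cx: "(\<forall>w\<in>set U. feval G v w \<in> carrier G) \<Longrightarrow> (\<forall>w\<in>set V. feval G v w \<in> carrier G) \<Longrightarrow>
   listprod G (map (feval G v) (cx U V)) = gcomm G (listprod G (map (feval G v) U)) (listprod G (map (feval G v) V))"
proof (induction U)
  case Nil
  have cV: "set (map (feval G v) V) \<subseteq> carrier G" using Nil.prems by auto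
  then show ?case by (simp add: gcomm_one_left)
next
  case (Cons u U)
  have cUe: "\<forall>w\<in>set U. feval G v w \<in> carrier G" using Cons.prems(1) by simp
  have cu: "feval G v u \<in> carrier G" using Cons.prems(1) by simp
  have cr: "\<forall>w\<in>set (cxr u V). feval G v w \<in> carrier G" using cxr_closed[OF cu Cons.prems(2)] by blast
  have c1: "set (map (feval G v) (conjexp (cxr u V) U)) \<subseteq> carrier G"
    using conjexp_closed[OF cr cUe] by auto
  have c2: "set (map (feval G v) (cx U V)) \<subseteq> carrier G" using cx_closed[OF cUe Cons.prems(2)] by auto
  have cV: "set (map (feval G v) V) \<subseteq> carrier G" using Cons.prems by auto
  have cU: "set (map (feval G v) U) \<subseteq> carrier G" using Cons.prems by auto
  have "listprod G (map (feval G v) (cx (u # U) V)) =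
     listprod G (map (feval G v) (conjexp (cxr u V) U)) \<otimes> listprod G (map (feval G v) (cx U V))"
    using c1 c2 by (simp add: listprod_append)
  also have "\<dots> = gconj G (gcomm G (feval G v u) (listprod G (map (feval G v) V))) (listprod G (map (feval G v) U))
     \<otimes> gcomm G (listprod G (map (feval G v) U)) (listprod G (map (feval G v) V))"
    using Cons val_conjexp[where T="cxr u V" and W=U] cr val_cxr[where u=u and V=V] by simp
  also have "\<dots> = gcomm G (feval G v u \<otimes> listprod G (map (feval G v) U)) (listprod G (map (feval G v) V))"
    using Cons.prems cV cU by (simp add: gcomm_mult_left)
  finally show ?case by simp
qed

end

lemma form_weight_pos: "form_weight g \<ge> 1"
  by (induction g) auto

lemma fweight_apply_form: "fweight (apply_form g p) = form_weight g"
  by (induction g arbitrary: p) auto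

lemma apply_form_cong: "wf_form g \<Longrightarrow> (\<forall>k\<in>{1..form_weight g}. y k = y' k) \<Longrightarrow> apply_form g y = apply_form g y'"
proof (induction g arbitrary: y y')
  case FLeaf then show ?case by simp
next
  case (FNode g1 g2 \<sigma>)
  let ?n = "form_weight g1 + form_weight g2"
  have s: "\<sigma> permutes {1..?n}" using FNode.prems by simp
  have a: "apply_form g1 (\<lambda>k. y (\<sigma> k)) = apply_form g1 (\<lambda>k. y' (\<sigma> k))"
  proof (rule FNode.IH(1))
    show "wf_form g1" using FNode.prems by simp
    show "\<forall>k\<in>{1..form_weight g1}. y (\<sigma> k) = y' (\<sigma> k)"
    proof
      fix k assume "k \<in> {1..form_weight g1}"
      then have "\<sigma> k \<in> {1..?n}" using permutes_in_image[OF s] by auto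
      then show "y (\<sigma> k) = y' (\<sigma> k)" using FNode.prems by simp
    qed
  qed
  have b: "apply_form g2 (\<lambda>k. y (\<sigma> (form_weight g1 + k))) = apply_form g2 (\<lambda>k. y' (\<sigma> (form_weight g1 + k)))"
  proof (rule FNode.IH(2))
    show "wf_form g2" using FNode.prems by simp
    show "\<forall>k\<in>{1..form_weight g2}. y (\<sigma> (form_weight g1 + k)) = y' (\<sigma> (form_weight g1 + k))"
    proof
      fix k assume "k \<in> {1..form_weight g2}"
      then have "\<sigma> (form_weight g1 + k) \<in> {1..?n}" using permutes_in_image[OF s] by auto
      then show "y (\<sigma> (form_weight g1 + k)) = y' (\<sigma> (form_weight g1 + k))" using FNode.prems by simp
    qed
  qed
  show ?case using a b by simp
qed


definition valid :: "nat \<Rightarrow> (nat \<Rightarrow> 'l list) \<Rightarrow> (nat \<Rightarrow> 'l) \<Rightarrow> bool" where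
  "valid n y p \<longleftrightarrow> (\<forall>k\<in>{1..n}. p k \<in> set (y k))"

lemma (in group) main:
  assumes "wf_form g"
    and "\<forall>k\<in>{1..form_weight g}. y k \<noteq> [] \<and> distinct (y k)"
    and "\<forall>k\<in>{1..form_weight g}. \<forall>k'\<in>{1..form_weight g}. k \<noteq> k' \<longrightarrow> set (y k) \<inter> set (y k') = {}"
    and "\<forall>k\<in>{1..form_weight g}. \<forall>a\<in>set (y k). v a \<in> carrier G"
  shows "\<exists>\<eta>. feval G id (apply_form g (\<lambda>k. listprod G (map v (y k)))) = listprod G (map (feval G v) \<eta>)
   \<and> (\<forall>p. valid (form_weight g) y p \<longrightarrow> apply_form g p \<in> set \<eta>)
   \<and> (\<forall>e\<in>set \<eta>. \<forall>k\<in>{1..form_weight g}. \<exists>a\<in>set (y k). a \<in> letters e)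
   \<and> distinct \<eta>
   \<and> (\<forall>e\<in>set \<eta>. (\<nexists>p. valid (form_weight g) y p \<and> e = apply_form g p) \<longrightarrow> fweight e > form_weight g)
   \<and> (\<forall>e\<in>set \<eta>. letters e \<subseteq> (\<Union>k\<in>{1..form_weight g}. set (y k)))
   \<and> (\<forall>e\<in>set \<eta>. \<forall>c\<in>set (rspine e). \<exists>k\<in>{1..form_weight g}. set (y k) \<inter> letters c = {})"
  using assms
proof (induction g arbitrary: y)
  case FLeaf
  let ?\<eta> = "map Letter (y 1)"
  have val: "feval G id (apply_form FLeaf (\<lambda>k. listprod G (map v (y k)))) = listprod G (map (feval G v) ?\<eta>)"
    by (simp add: o_def)
  have b: "\<forall>p. valid (form_weight FLeaf) y p \<longrightarrow> apply_form FLeaf p \<in> set ?\<eta>"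
    by (auto simp: valid_def)
  have w: "\<forall>e\<in>set ?\<eta>. (\<nexists>p. valid (form_weight FLeaf) y p \<and> e = apply_form FLeaf p) \<longrightarrow> fweight e > form_weight FLeaf"
  proof (intro ballI impI)
    fix e assume e: "e \<in> set ?\<eta>" and np: "\<nexists>p. valid (form_weight FLeaf) y p \<and> e = apply_form FLeaf p"
    from e obtain a where a: "a \<in> set (y 1)" "e = Letter a" by auto
    have "valid (form_weight FLeaf) y (\<lambda>_. a) \<and> e = apply_form FLeaf (\<lambda>_. a)"
      using a by (auto simp: valid_def)
    with np show "fweight e > form_weight FLeaf" by blast
  qed
  show ?case
    apply (rule exI[of _ ?\<eta>])
    using FLeaf.prems val b w by (auto simp: distinct_map inj_on_def o_def)
next
  case (FNode g1 g2 \<sigma>)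
  define n1 where "n1 = form_weight g1"
  define n2 where "n2 = form_weight g2"
  define n where "n = n1 + n2"
  have fw: "form_weight (FNode g1 g2 \<sigma>) = n" by (simp add: n_def n1_def n2_def)
  have wf1: "wf_form g1" and wf2: "wf_form g2" using FNode.prems(1) by auto
  have s: "\<sigma> permutes {1..n}" using FNode.prems(1) by (simp add: n_def n1_def n2_def)
  have n1p: "n1 \<ge> 1" and n2p: "n2 \<ge> 1" using form_weight_pos n1_def n2_def by auto
  have inS: "\<And>k. k \<in> {1..n} \<Longrightarrow> \<sigma> k \<in> {1..n}" using permutes_in_image[OF s] by blast
  have in1: "\<And>k. k \<in> {1..n1} \<Longrightarrow> \<sigma> k \<in> {1..n}" using inS by (auto simp: n_def)
  have in2: "\<And>k. k \<in> {1..n2} \<Longrightarrow> \<sigma> (n1 + k) \<in> {1..n}" using inS by (auto simp: n_def)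
  have injs: "\<And>a b. \<sigma> a = \<sigma> b \<Longrightarrow> a = b" using permutes_inj[OF s] by (auto dest: injD)
  have invs: "\<And>k. \<sigma> (inv_into UNIV \<sigma> k) = k" "\<And>k. inv_into UNIV \<sigma> (\<sigma> k) = k"
    using permutes_inverses[OF s] by auto
  have invS: "\<And>k. k \<in> {1..n} \<Longrightarrow> inv_into UNIV \<sigma> k \<in> {1..n}"
    using permutes_in_image[OF permutes_inv[OF s]] by blast
  note P2 = FNode.prems(2)[unfolded fw] and P3 = FNode.prems(3)[unfolded fw] and P4 = FNode.prems(4)[unfolded fw]
  define y1 where "y1 = (\<lambda>k. y (\<sigma> k))"
  define y2 where "y2 = (\<lambda>k. y (\<sigma> (n1 + k)))"
  have "\<exists>\<eta>. feval G id (apply_form g1 (\<lambda>k. listprod G (map v (y1 k)))) = listprod G (map (feval G v) \<eta>)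
   \<and> (\<forall>p. valid n1 y1 p \<longrightarrow> apply_form g1 p \<in> set \<eta>)
   \<and> (\<forall>e\<in>set \<eta>. \<forall>k\<in>{1..n1}. \<exists>a\<in>set (y1 k). a \<in> letters e)
   \<and> distinct \<eta>
   \<and> (\<forall>e\<in>set \<eta>. (\<nexists>p. valid n1 y1 p \<and> e = apply_form g1 p) \<longrightarrow> fweight e > n1)
   \<and> (\<forall>e\<in>set \<eta>. letters e \<subseteq> (\<Union>k\<in>{1..n1}. set (y1 k)))
   \<and> (\<forall>e\<in>set \<eta>. \<forall>c\<in>set (rspine e). \<exists>k\<in>{1..n1}. set (y1 k) \<inter> letters c = {})"
    unfolding n1_def
  proof (rule FNode.IH(1)[OF wf1])
    show "\<forall>k\<in>{1..form_weight g1}. y1 k \<noteq> [] \<and> distinct (y1 k)"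
      using P2 in1 by (auto simp: y1_def n1_def)
    show "\<forall>k\<in>{1..form_weight g1}. \<forall>k'\<in>{1..form_weight g1}. k \<noteq> k' \<longrightarrow> set (y1 k) \<inter> set (y1 k') = {}"
      using P3 in1 injs unfolding y1_def n1_def by metis
    show "\<forall>k\<in>{1..form_weight g1}. \<forall>a\<in>set (y1 k). v a \<in> carrier G"
      using P4 in1 by (auto simp: y1_def n1_def)
  qed
  then obtain U where U1: "feval G id (apply_form g1 (\<lambda>k. listprod G (map v (y1 k)))) = listprod G (map (feval G v) U)"
    and U2: "\<forall>p. valid n1 y1 p \<longrightarrow> apply_form g1 p \<in> set U"
    and U3: "\<forall>e\<in>set U. \<forall>k\<in>{1..n1}. \<exists>a\<in>set (y1 k). a \<in> letters e"
    and U4: "distinct U"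
    and U5: "\<forall>e\<in>set U. (\<nexists>p. valid n1 y1 p \<and> e = apply_form g1 p) \<longrightarrow> fweight e > n1"
    and U6: "\<forall>e\<in>set U. letters e \<subseteq> (\<Union>k\<in>{1..n1}. set (y1 k))"
    and U7: "\<forall>e\<in>set U. \<forall>c\<in>set (rspine e). \<exists>k\<in>{1..n1}. set (y1 k) \<inter> letters c = {}"
    by blast
  have "\<exists>\<eta>. feval G id (apply_form g2 (\<lambda>k. listprod G (map v (y2 k)))) = listprod G (map (feval G v) \<eta>)
   \<and> (\<forall>p. valid n2 y2 p \<longrightarrow> apply_form g2 p \<in> set \<eta>)
   \<and> (\<forall>e\<in>set \<eta>. \<forall>k\<in>{1..n2}. \<exists>a\<in>set (y2 k). a \<in> letters e)
   \<and> distinct \<eta>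
   \<and> (\<forall>e\<in>set \<eta>. (\<nexists>p. valid n2 y2 p \<and> e = apply_form g2 p) \<longrightarrow> fweight e > n2)
   \<and> (\<forall>e\<in>set \<eta>. letters e \<subseteq> (\<Union>k\<in>{1..n2}. set (y2 k)))
   \<and> (\<forall>e\<in>set \<eta>. \<forall>c\<in>set (rspine e). \<exists>k\<in>{1..n2}. set (y2 k) \<inter> letters c = {})"
    unfolding n2_def
  proof (rule FNode.IH(2)[OF wf2])
    show "\<forall>k\<in>{1..form_weight g2}. y2 k \<noteq> [] \<and> distinct (y2 k)"
      using P2 in2 by (auto simp: y2_def n2_def)
    show "\<forall>k\<in>{1..form_weight g2}. \<forall>k'\<in>{1..form_weight g2}. k \<noteq> k' \<longrightarrow> set (y2 k) \<inter> set (y2 k') = {}"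
      using P3 in2 injs unfolding y2_def n2_def by (metis add_left_cancel)
    show "\<forall>k\<in>{1..form_weight g2}. \<forall>a\<in>set (y2 k). v a \<in> carrier G"
      using P4 in2 by (auto simp: y2_def n2_def)
  qed
  then obtain V where V1: "feval G id (apply_form g2 (\<lambda>k. listprod G (map v (y2 k)))) = listprod G (map (feval G v) V)"
    and V2: "\<forall>p. valid n2 y2 p \<longrightarrow> apply_form g2 p \<in> set V"
    and V3: "\<forall>e\<in>set V. \<forall>k\<in>{1..n2}. \<exists>a\<in>set (y2 k). a \<in> letters e"
    and V4: "distinct V"
    and V5: "\<forall>e\<in>set V. (\<nexists>p. valid n2 y2 p \<and> e = apply_form g2 p) \<longrightarrow> fweight e > n2"
    and V6: "\<forall>e\<in>set V. letters e \<subseteq> (\<Union>k\<in>{1..n2}. set (y2 k))"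
    and V7: "\<forall>e\<in>set V. \<forall>c\<in>set (rspine e). \<exists>k\<in>{1..n2}. set (y2 k) \<inter> letters c = {}"
    by blast
  define J1 where "J1 = (\<Union>k\<in>{1..n1}. set (y1 k))"
  define J2 where "J2 = (\<Union>k\<in>{1..n2}. set (y2 k))"
  have J12: "J1 \<inter> J2 = {}"
  proof -
    have "set (y1 k) \<inter> set (y2 k') = {}" if "k \<in> {1..n1}" "k' \<in> {1..n2}" for k k'
    proof -
      have "\<sigma> k \<noteq> \<sigma> (n1 + k')" using that injs by (metis add_le_same_cancel1 atLeastAtMost_iff not_one_le_zero le_trans)
      then show ?thesis using P3 in1 in2 that by (simp add: y1_def y2_def)
    qed
    then show ?thesis unfolding J1_def J2_def by blast
  qed
  have J1sub: "J1 \<subseteq> (\<Union>k\<in>{1..n}. set (y k))" using in1 unfolding J1_def y1_def by blast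
  have J2sub: "J2 \<subseteq> (\<Union>k\<in>{1..n}. set (y k))" using in2 unfolding J2_def y2_def by blast
  have UV: "set U \<inter> set V = {}"
  proof -
    have "False" if "e \<in> set U" "e \<in> set V" for e
      using U6 V6 J12 letters_ne[of e] that unfolding J1_def J2_def by blast
    then show ?thesis by blast
  qed
  have D4: "\<forall>u\<in>set U. set (rspine u) \<inter> set V = {}"
  proof -
    have "False" if "u \<in> set U" "c \<in> set (rspine u)" "c \<in> set V" for u c
      using U6 V6 J12 letters_ne[of c] rspine_letters[OF that(2)] that unfolding J1_def J2_def by blast
    then show ?thesis by blast
  qed
  have D5: "\<forall>u\<in>set U. set (rspine u) \<inter> set U = {}"
  proof -
    have "False" if "u \<in> set U" "c \<in> set (rspine u)" "c \<in> set U" for u c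
    proof -
      from U7 that obtain k where k: "k \<in> {1..n1}" "set (y1 k) \<inter> letters c = {}" by blast
      from U3 that k obtain a where "a \<in> set (y1 k)" "a \<in> letters c" by blast
      with k show False by blast
    qed
    then show ?thesis by blast
  qed
  have Ucar: "\<forall>e\<in>set U. feval G v e \<in> carrier G"
    using U6 P4 in1 unfolding y1_def by (force intro!: feval_closed)
  have Vcar: "\<forall>e\<in>set V. feval G v e \<in> carrier G"
    using V6 P4 in2 unfolding y2_def by (force intro!: feval_closed)
  have Uw: "\<forall>u\<in>set U. fweight u \<ge> n1"
    using U5 fweight_apply_form n1_def by (metis less_imp_le order_refl)
  have Vw: "\<forall>u\<in>set V. fweight u \<ge> n2"
    using V5 fweight_apply_form n2_def by (metis less_imp_le order_refl)
  let ?\<eta> = "cx U V"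
  have i: "feval G id (apply_form (FNode g1 g2 \<sigma>) (\<lambda>k. listprod G (map v (y k)))) = listprod G (map (feval G v) ?\<eta>)"
  proof -
    have "feval G id (apply_form (FNode g1 g2 \<sigma>) (\<lambda>k. listprod G (map v (y k))))
       = gcomm G (feval G id (apply_form g1 (\<lambda>k. listprod G (map v (y1 k)))))
                 (feval G id (apply_form g2 (\<lambda>k. listprod G (map v (y2 k)))))"
      by (simp add: y1_def y2_def n1_def)
    also have "\<dots> = listprod G (map (feval G v) ?\<eta>)" unfolding U1 V1 using val_cx[OF Ucar Vcar] by simp
    finally show ?thesis .
  qed
  have ii: "\<forall>p. valid n y p \<longrightarrow> apply_form (FNode g1 g2 \<sigma>) p \<in> set ?\<eta>"
  proof (intro allI impI)
    fix p assume p: "valid n y p"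
    have "valid n1 y1 (\<lambda>k. p (\<sigma> k))" using p in1 unfolding valid_def y1_def by blast
    then have "apply_form g1 (\<lambda>k. p (\<sigma> k)) \<in> set U" using U2 by blast
    moreover have "valid n2 y2 (\<lambda>k. p (\<sigma> (n1 + k)))" using p in2 unfolding valid_def y2_def by blast
    then have "apply_form g2 (\<lambda>k. p (\<sigma> (n1 + k))) \<in> set V" using V2 by blast
    ultimately show "apply_form (FNode g1 g2 \<sigma>) p \<in> set ?\<eta>" by (simp add: n1_def cx_basic)
  qed
  have iii: "\<forall>e\<in>set ?\<eta>. \<forall>k\<in>{1..n}. \<exists>a\<in>set (y k). a \<in> letters e"
  proof (intro ballI)
    fix e k assume e: "e \<in> set ?\<eta>" and k: "k \<in> {1..n}"
    from cx_mem[OF e] obtain u w S where uw: "u \<in> set U" "w \<in> set V" "e = foldl Comm (Comm u w) S" by blast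
    have le: "letters u \<subseteq> letters e" "letters w \<subseteq> letters e" using uw(3) by (auto simp: foldl_letters)
    define k' where "k' = inv_into UNIV \<sigma> k"
    have k': "k' \<in> {1..n}" "\<sigma> k' = k" using invS[OF k] invs unfolding k'_def by auto
    show "\<exists>a\<in>set (y k). a \<in> letters e"
    proof (cases "k' \<le> n1")
      case True
      then have "k' \<in> {1..n1}" using k' by auto
      then obtain a where "a \<in> set (y1 k')" "a \<in> letters u" using U3 uw by blast
      then show ?thesis using le k' unfolding y1_def by auto
    next
      case False
      then have "k' - n1 \<in> {1..n2}" "n1 + (k' - n1) = k'" using k' by (auto simp: n_def)
      then obtain a where "a \<in> set (y2 (k' - n1))" "a \<in> letters w" using V3 uw by blast
      then show ?thesis using le k' \<open>n1 + (k' - n1) = k'\<close> unfolding y2_def by auto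
    qed
  qed
  have iv: "distinct ?\<eta>" using cx_distinct[OF U4 V4 UV D4 D5] .
  have v: "\<forall>e\<in>set ?\<eta>. (\<nexists>p. valid n y p \<and> e = apply_form (FNode g1 g2 \<sigma>) p) \<longrightarrow> fweight e > n"
  proof (intro ballI impI)
    fix e assume e: "e \<in> set ?\<eta>" and np: "\<nexists>p. valid n y p \<and> e = apply_form (FNode g1 g2 \<sigma>) p"
    from cx_mem[OF e] obtain u w S where uw: "u \<in> set U" "w \<in> set V" "e = foldl Comm (Comm u w) S" by blast
    have wu: "fweight u \<ge> n1" "fweight w \<ge> n2" using Uw Vw uw by auto
    show "fweight e > n"
    proof (cases "S = []")
      case False
      then have "fweight e > fweight (Comm u w)" using uw foldl_weight_ne by blast
      then show ?thesis using wu by (simp add: n_def)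
    next
      case True
      then have eq: "e = Comm u w" using uw by simp
      show ?thesis
      proof (rule ccontr)
        assume "\<not> fweight e > n"
        then have "fweight u \<le> n1" "fweight w \<le> n2" using eq wu by (auto simp: n_def)
        then have "\<exists>p1. valid n1 y1 p1 \<and> u = apply_form g1 p1" "\<exists>p2. valid n2 y2 p2 \<and> w = apply_form g2 p2"
          using U5 V5 uw by (meson not_le)+
        then obtain p1 p2 where p1: "valid n1 y1 p1" "u = apply_form g1 p1"
          and p2: "valid n2 y2 p2" "w = apply_form g2 p2" by blast
        define p where "p = (\<lambda>k. if inv_into UNIV \<sigma> k \<le> n1 then p1 (inv_into UNIV \<sigma> k) else p2 (inv_into UNIV \<sigma> k - n1))"
        have pv: "valid n y p" unfolding valid_def
        proof
          fix k assume k: "k \<in> {1..n}"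
          define k' where "k' = inv_into UNIV \<sigma> k"
          have k': "k' \<in> {1..n}" "\<sigma> k' = k" using invS[OF k] invs unfolding k'_def by auto
          show "p k \<in> set (y k)"
          proof (cases "k' \<le> n1")
            case True
            then have "k' \<in> {1..n1}" using k' by auto
            then have "p1 k' \<in> set (y (\<sigma> k'))" using p1(1) unfolding valid_def y1_def by blast
            moreover have "p k = p1 k'" using True unfolding p_def k'_def by simp
            ultimately show ?thesis using k'(2) by simp
          next
            case False
            then have "k' - n1 \<in> {1..n2}" "n1 + (k' - n1) = k'" using k' by (auto simp: n_def)
            then have "p2 (k' - n1) \<in> set (y (\<sigma> (n1 + (k' - n1))))" using p2(1) unfolding valid_def y2_def by blast
            moreover have "p k = p2 (k' - n1)" using False unfolding p_def k'_def by simp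
            ultimately show ?thesis using k'(2) \<open>n1 + (k' - n1) = k'\<close> by simp
          qed
        qed
        have a1: "apply_form g1 (\<lambda>k. p (\<sigma> k)) = apply_form g1 p1"
          by (rule apply_form_cong[OF wf1]) (auto simp: p_def invs n1_def)
        have a2: "apply_form g2 (\<lambda>k. p (\<sigma> (n1 + k))) = apply_form g2 p2"
          by (rule apply_form_cong[OF wf2]) (auto simp: p_def invs n2_def)
        have "e = apply_form (FNode g1 g2 \<sigma>) p" using eq a1 a2 p1 p2 by (simp add: n1_def)
        with pv np show False by blast
      qed
    qed
  qed
  have vi: "\<forall>e\<in>set ?\<eta>. letters e \<subseteq> (\<Union>k\<in>{1..n}. set (y k))"
  proof
    fix e assume e: "e \<in> set ?\<eta>"
    from cx_mem[OF e] obtain u w S where uw: "u \<in> set U" "w \<in> set V" "set S \<subseteq> set U \<union> set V"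
      "e = foldl Comm (Comm u w) S" by blast
    have "letters e = letters u \<union> letters w \<union> (\<Union>s\<in>set S. letters s)" using uw by (auto simp: foldl_letters)
    also have "\<dots> \<subseteq> J1 \<union> J2" using uw U6 V6 unfolding J1_def J2_def by blast
    finally show "letters e \<subseteq> (\<Union>k\<in>{1..n}. set (y k))" using J1sub J2sub by blast
  qed
  have vii: "\<forall>e\<in>set ?\<eta>. \<forall>c\<in>set (rspine e). \<exists>k\<in>{1..n}. set (y k) \<inter> letters c = {}"
  proof (intro ballI)
    fix e c assume e: "e \<in> set ?\<eta>" and c: "c \<in> set (rspine e)"
    from cx_mem[OF e] obtain u w S where uw: "u \<in> set U" "w \<in> set V" "set S \<subseteq> set U \<union> set V"
      "e = foldl Comm (Comm u w) S" by blast
    have rs: "rspine e = rspine u @ w # S" using uw(4) by (simp add: foldl_rspine)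
    have "c \<in> set (rspine u) \<or> c = w \<or> c \<in> set S" using c unfolding rs by auto
    then have "c \<in> set (rspine u) \<or> c \<in> set U \<or> c \<in> set V" using uw(2,3) by blast
    moreover have "\<exists>k\<in>{1..n}. set (y k) \<inter> letters c = {}" if "c \<in> set (rspine u)"
    proof -
      have "\<exists>k\<in>{1..n1}. set (y1 k) \<inter> letters c = {}" using U7 uw(1) that by blast
      then obtain k where k: "k \<in> {1..n1}" "set (y (\<sigma> k)) \<inter> letters c = {}" unfolding y1_def by blast
      have "\<sigma> k \<in> {1..n}" by (rule in1[OF k(1)])
      then show ?thesis using k(2) by (intro bexI[of _ "\<sigma> k"])
    qed
    moreover have "\<exists>k\<in>{1..n}. set (y k) \<inter> letters c = {}" if "c \<in> set V"
    proof -
      have "1 \<in> {1..n1}" using n1p by auto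
      then have "set (y (\<sigma> 1)) \<subseteq> J1" unfolding J1_def y1_def by blast
      moreover have "letters c \<subseteq> J2" using V6 that unfolding J2_def by blast
      moreover have "\<sigma> 1 \<in> {1..n}" by (rule in1[OF \<open>1 \<in> {1..n1}\<close>])
      moreover have "set (y (\<sigma> 1)) \<inter> letters c = {}" using J12 calculation(1,2) by blast
      ultimately show ?thesis by (intro bexI[of _ "\<sigma> 1"])
    qed
    moreover have "\<exists>k\<in>{1..n}. set (y k) \<inter> letters c = {}" if "c \<in> set U"
    proof -
      have "1 \<in> {1..n2}" using n2p by auto
      then have "set (y (\<sigma> (n1 + 1))) \<subseteq> J2" unfolding J2_def y2_def by blast
      moreover have "letters c \<subseteq> J1" using U6 that unfolding J1_def by blast
      moreover have "\<sigma> (n1 + 1) \<in> {1..n}" by (rule in2[OF \<open>1 \<in> {1..n2}\<close>])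
      moreover have "set (y (\<sigma> (n1 + 1))) \<inter> letters c = {}" using J12 calculation(1,2) by blast
      ultimately show ?thesis by (intro bexI[of _ "\<sigma> (n1 + 1)"])
    qed
    ultimately show "\<exists>k\<in>{1..n}. set (y k) \<inter> letters c = {}" by blast
  qed
  show ?case unfolding fw
    by (rule exI[of _ ?\<eta>]) (use i ii iii iv v vi vii in blast)
qed


theorem propositionB2:
  fixes G :: "('g, 'b) monoid_scheme"
    and r :: nat and m :: "nat \<Rightarrow> nat" and x :: "nat \<Rightarrow> nat \<Rightarrow> 'g"
    and \<alpha> :: cform
  assumes nil: "nilpotent_group G"
    and r: "r \<ge> 1"
    and m: "\<forall>j\<in>{1..r}. m j \<ge> 1"
    and x: "\<forall>j\<in>{1..r}. \<forall>i\<in>{1..m j}. x j i \<in> carrier G"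
    and \<alpha>: "is_comm_form r \<alpha>"
  shows "\<exists>\<eta> :: (nat \<times> nat) fcomm list.
     (\<forall>l<length \<eta>. letters (\<eta> ! l) \<subseteq> {(j, i). j \<in> {1..r} \<and> i \<in> {1..m j}})
   \<and> feval G id (apply_form \<alpha> (\<lambda>j. gprod G (x j) (m j)))
       = listprod G (map (feval G (\<lambda>(j, i). x j i)) \<eta>)
   \<and> (\<forall>ii :: nat \<Rightarrow> nat. (\<forall>j\<in>{1..r}. ii j \<in> {1..m j}) \<longrightarrow>
        (\<exists>l<length \<eta>. \<eta> ! l = apply_form \<alpha> (\<lambda>j. (j, ii j))))
   \<and> (\<forall>l<length \<eta>. \<forall>j\<in>{1..r}. \<exists>i\<in>{1..m j}. Letter (j, i) \<in> components (\<eta> ! l))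
   \<and> distinct \<eta>
   \<and> (\<forall>l<length \<eta>.
        (\<nexists>ii :: nat \<Rightarrow> nat. (\<forall>j\<in>{1..r}. ii j \<in> {1..m j}) \<and> \<eta> ! l = apply_form \<alpha> (\<lambda>j. (j, ii j)))
        \<longrightarrow> fweight (\<eta> ! l) > r)"
proof -
  have grp: "group G" using nil unfolding nilpotent_group_def by blast
  interpret group G by (rule grp)
  have wf: "wf_form \<alpha>" and fwa: "form_weight \<alpha> = r" using \<alpha> unfolding is_comm_form_def by auto
  define y where "y = (\<lambda>j. map (\<lambda>i. (j, i)) [1..<Suc (m j)])"
  have sety: "\<And>j. set (y j) = {(j, i) | i. i \<in> {1..m j}}" unfolding y_def by auto
  have H2: "\<forall>k\<in>{1..form_weight \<alpha>}. y k \<noteq> [] \<and> distinct (y k)"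
    using m unfolding fwa y_def by (auto simp: distinct_map inj_on_def)
  have H3: "\<forall>k\<in>{1..form_weight \<alpha>}. \<forall>k'\<in>{1..form_weight \<alpha>}. k \<noteq> k' \<longrightarrow> set (y k) \<inter> set (y k') = {}"
    unfolding sety by auto
  have H4: "\<forall>k\<in>{1..form_weight \<alpha>}. \<forall>a\<in>set (y k). (\<lambda>(j, i). x j i) a \<in> carrier G"
    using x unfolding fwa sety by auto
  obtain \<eta> where E1: "feval G id (apply_form \<alpha> (\<lambda>k. listprod G (map (\<lambda>(j, i). x j i) (y k)))) =
        listprod G (map (feval G (\<lambda>(j, i). x j i)) \<eta>)"
    and E2: "\<forall>p. valid r y p \<longrightarrow> apply_form \<alpha> p \<in> set \<eta>"
    and E3: "\<forall>e\<in>set \<eta>. \<forall>k\<in>{1..r}. \<exists>a\<in>set (y k). a \<in> letters e"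
    and E4: "distinct \<eta>"
    and E5: "\<forall>e\<in>set \<eta>. (\<nexists>p. valid r y p \<and> e = apply_form \<alpha> p) \<longrightarrow> fweight e > r"
    and E6: "\<forall>e\<in>set \<eta>. letters e \<subseteq> (\<Union>k\<in>{1..r}. set (y k))"
    using main[OF wf H2 H3 H4] unfolding fwa by blast
  have C1: "\<forall>l<length \<eta>. letters (\<eta> ! l) \<subseteq> {(j, i). j \<in> {1..r} \<and> i \<in> {1..m j}}"
  proof (intro allI impI)
    fix l assume "l < length \<eta>"
    then have "\<eta> ! l \<in> set \<eta>" by simp
    then have "letters (\<eta> ! l) \<subseteq> (\<Union>k\<in>{1..r}. set (y k))" using E6 by blast
    also have "\<dots> \<subseteq> {(j, i). j \<in> {1..r} \<and> i \<in> {1..m j}}" unfolding sety by auto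
    finally show "letters (\<eta> ! l) \<subseteq> {(j, i). j \<in> {1..r} \<and> i \<in> {1..m j}}" .
  qed
  have C2: "feval G id (apply_form \<alpha> (\<lambda>j. gprod G (x j) (m j))) = listprod G (map (feval G (\<lambda>(j, i). x j i)) \<eta>)"
  proof -
    have "apply_form \<alpha> (\<lambda>j. gprod G (x j) (m j)) = apply_form \<alpha> (\<lambda>k. listprod G (map (\<lambda>(j, i). x j i) (y k)))"
    proof (rule apply_form_cong[OF wf], intro ballI)
      fix k assume k: "k \<in> {1..form_weight \<alpha>}"
      then have "\<forall>i\<in>{1..m k}. x k i \<in> carrier G" using x fwa by auto
      then have "gprod G (x k) (m k) = listprod G (map (x k) [1..<Suc (m k)])" by (rule gprod_listprod)
      also have "map (x k) [1..<Suc (m k)] = map (\<lambda>(j, i). x j i) (y k)" unfolding y_def by simp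
      finally show "gprod G (x k) (m k) = listprod G (map (\<lambda>(j, i). x j i) (y k))" .
    qed
    then show ?thesis using E1 by simp
  qed
  have C3: "\<forall>ii :: nat \<Rightarrow> nat. (\<forall>j\<in>{1..r}. ii j \<in> {1..m j}) \<longrightarrow>
        (\<exists>l<length \<eta>. \<eta> ! l = apply_form \<alpha> (\<lambda>j. (j, ii j)))"
  proof (intro allI impI)
    fix ii :: "nat \<Rightarrow> nat" assume ii: "\<forall>j\<in>{1..r}. ii j \<in> {1..m j}"
    have "valid r y (\<lambda>j. (j, ii j))" unfolding valid_def sety using ii by auto
    then have "apply_form \<alpha> (\<lambda>j. (j, ii j)) \<in> set \<eta>" using E2 by blast
    then show "\<exists>l<length \<eta>. \<eta> ! l = apply_form \<alpha> (\<lambda>j. (j, ii j))" by (metis in_set_conv_nth)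
  qed
  have C4: "\<forall>l<length \<eta>. \<forall>j\<in>{1..r}. \<exists>i\<in>{1..m j}. Letter (j, i) \<in> components (\<eta> ! l)"
  proof (intro allI impI ballI)
    fix l j assume l: "l < length \<eta>" and j: "j \<in> {1..r}"
    then have "\<eta> ! l \<in> set \<eta>" by simp
    then obtain a where "a \<in> set (y j)" "a \<in> letters (\<eta> ! l)" using E3 j by blast
    then show "\<exists>i\<in>{1..m j}. Letter (j, i) \<in> components (\<eta> ! l)"
      unfolding sety by (auto simp: letter_components)
  qed
  have C6: "\<forall>l<length \<eta>.
        (\<nexists>ii :: nat \<Rightarrow> nat. (\<forall>j\<in>{1..r}. ii j \<in> {1..m j}) \<and> \<eta> ! l = apply_form \<alpha> (\<lambda>j. (j, ii j)))
        \<longrightarrow> fweight (\<eta> ! l) > r"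
  proof (intro allI impI)
    fix l assume l: "l < length \<eta>"
      and nii: "\<nexists>ii :: nat \<Rightarrow> nat. (\<forall>j\<in>{1..r}. ii j \<in> {1..m j}) \<and> \<eta> ! l = apply_form \<alpha> (\<lambda>j. (j, ii j))"
    have "\<nexists>p. valid r y p \<and> \<eta> ! l = apply_form \<alpha> p"
    proof
      assume "\<exists>p. valid r y p \<and> \<eta> ! l = apply_form \<alpha> p"
      then obtain p where p: "valid r y p" "\<eta> ! l = apply_form \<alpha> p" by blast
      define ii where "ii = (\<lambda>j. snd (p j))"
      have pj: "\<forall>j\<in>{1..r}. p j = (j, ii j) \<and> ii j \<in> {1..m j}"
        using p(1) unfolding valid_def sety ii_def by auto
      have "apply_form \<alpha> p = apply_form \<alpha> (\<lambda>j. (j, ii j))"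
        by (rule apply_form_cong[OF wf]) (use pj fwa in auto)
      then have "\<eta> ! l = apply_form \<alpha> (\<lambda>j. (j, ii j))" using p(2) by simp
      moreover have "\<forall>j\<in>{1..r}. ii j \<in> {1..m j}" using pj by blast
      ultimately show False using nii by blast
    qed
    moreover have "\<eta> ! l \<in> set \<eta>" using l by simp
    ultimately show "fweight (\<eta> ! l) > r" using E5 by blast
  qed
  show ?thesis using C1 C2 C3 C4 E4 C6 by blast
qed

end
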